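(* Let $\psi,h\in C^\infty(B_2)$ with $0<\psi<\frac12$ and $h\ge0$, and define $f(x):=\inf_{y\in B(x,\psi(x))}h(y)$. Then for a.e. $x\in B_1$, $$|\nabla f(x)-\nabla h(y)|=|\nabla h(y)|\,|\nabla\psi(x)|\quad\text{whenever } y\in B(x,\psi(x))\text{ and } f(x)=h(y).$$
   Context: $B(x,r)$ is the closed ball of radius $r$ centered at $x$; $f$ is Lipschitz continuous, so $\nabla f$ exists a.e. *)

theory Defs
  imports "HOL-Analysis.Analysis"
begin

inductive iter_deriv :: "'a set \<Rightarrow> ('a::real_normed_vector \<Rightarrow> real) \<Rightarrow> ('a \<Rightarrow> real) \<Rightarrow> bool"
  for S f where
  base: "iter_deriv S f f"
| step: "iter_deriv S f g \<Longrightarrow> g differentiable_on S \<Longrightarrow>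
           iter_deriv S f (\<lambda>x. frechet_derivative g (at x) v)"

definition smooth_on :: "'a set \<Rightarrow> ('a::real_normed_vector \<Rightarrow> real) \<Rightarrow> bool" where
  "smooth_on S f \<longleftrightarrow> (\<forall>g. iter_deriv S f g \<longrightarrow> g differentiable_on S)"

end

theory Submission
  imports Defs
begin

definition gradf :: "('a::euclidean_space \<Rightarrow> real) \<Rightarrow> 'a \<Rightarrow> 'a" where
  "gradf h x = (\<Sum>b\<in>Basis. frechet_derivative h (at x) b *\<^sub>R b)"

lemma linear_real_inner_grad:
  fixes L :: "'a::euclidean_space \<Rightarrow> real"
  assumes "linear L"
  shows "L v = v \<bullet> (\<Sum>b\<in>Basis. L b *\<^sub>R b)"
proof -
  have "L v = L (\<Sum>b\<in>Basis. (v \<bullet> b) *\<^sub>R b)" by (simp add: euclidean_representation)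
  also have "\<dots> = (\<Sum>b\<in>Basis. (v \<bullet> b) * L b)"
    using assms by (simp add: linear_sum linear_scale)
  also have "\<dots> = v \<bullet> (\<Sum>b\<in>Basis. L b *\<^sub>R b)"
    by (simp add: inner_sum_right mult.commute)
  finally show ?thesis .
qed

lemma smooth_grad:
  assumes "smooth_on S h" "open S"
  shows "\<And>x. x \<in> S \<Longrightarrow> (h has_derivative (\<lambda>v. v \<bullet> gradf h x)) (at x)"
    and "continuous_on S (gradf h)"
proof -
  have hd: "h differentiable_on S"
    using assms(1) iter_deriv.base unfolding smooth_on_def by blast
  fix x assume x: "x \<in> S"
  then have "h differentiable (at x)"
    using hd assms(2) differentiable_on_eq_differentiable_at by blast
  then have d: "(h has_derivative frechet_derivative h (at x)) (at x)"
    using frechet_derivative_works by blast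
  then have "linear (frechet_derivative h (at x))"
    using has_derivative_linear by blast
  then have "frechet_derivative h (at x) = (\<lambda>v. v \<bullet> gradf h x)"
    by (auto simp: gradf_def intro!: ext linear_real_inner_grad)
  with d show "(h has_derivative (\<lambda>v. v \<bullet> gradf h x)) (at x)" by simp
next
  have "continuous_on S (\<lambda>x. frechet_derivative h (at x) b)" for b
  proof -
    have "iter_deriv S h (\<lambda>x. frechet_derivative h (at x) b)"
      using assms(1) iter_deriv.base iter_deriv.step unfolding smooth_on_def by blast
    then have "(\<lambda>x. frechet_derivative h (at x) b) differentiable_on S"
      using assms(1) unfolding smooth_on_def by blast
    then show ?thesis using differentiable_imp_continuous_on by blast
  qed
  then show "continuous_on S (gradf h)"
    unfolding gradf_def by (intro continuous_intros) auto
qed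

lemma proj_norm:
  fixes u w :: "'a::euclidean_space"
  assumes "w \<noteq> 0" "\<bar>u \<bullet> w\<bar> \<le> (1/2) * norm w * norm u"
  shows "norm u \<le> 2 * norm (u - ((u \<bullet> w) / (w \<bullet> w)) *\<^sub>R w)"
proof -
  define c where "c = (u \<bullet> w) / (w \<bullet> w)"
  have ww: "w \<bullet> w > 0" using assms(1) by simp
  have "(norm (u - c *\<^sub>R w))\<^sup>2 = u \<bullet> u - 2 * c * (u \<bullet> w) + c * c * (w \<bullet> w)"
    by (simp add: power2_norm_eq_inner inner_diff_left inner_diff_right inner_commute algebra_simps)
  also have "\<dots> = u \<bullet> u - (u \<bullet> w)\<^sup>2 / (w \<bullet> w)"
    using ww by (simp add: c_def field_simps power2_eq_square)
  finally have e1: "(norm (u - c *\<^sub>R w))\<^sup>2 = (norm u)\<^sup>2 - (u \<bullet> w)\<^sup>2 / (norm w)\<^sup>2"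
    by (simp add: power2_norm_eq_inner)
  have "(u \<bullet> w)\<^sup>2 \<le> ((1/2) * norm w * norm u)\<^sup>2"
    using assms(2) by (metis abs_ge_zero abs_le_square_iff abs_of_nonneg order_trans power2_abs)
  then have "(u \<bullet> w)\<^sup>2 / (norm w)\<^sup>2 \<le> (1/4) * (norm u)\<^sup>2"
    using assms(1) by (simp add: divide_simps power_mult_distrib mult.commute)
  with e1 have "(norm (u - c *\<^sub>R w))\<^sup>2 \<ge> (3/4) * (norm u)\<^sup>2" by linarith
  moreover have "(norm u)\<^sup>2 \<ge> 0" by simp
  moreover have "(2 * norm (u - c *\<^sub>R w))\<^sup>2 = 4 * (norm (u - c *\<^sub>R w))\<^sup>2"
    by (simp add: power_mult_distrib)
  ultimately have "(norm u)\<^sup>2 \<le> (2 * norm (u - c *\<^sub>R w))\<^sup>2"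
    by linarith
  then show ?thesis unfolding c_def by (rule power2_le_imp_le) simp
qed

lemma graph_negligible:
  fixes A :: "'a::euclidean_space set"
  assumes w: "w \<noteq> 0"
    and cone: "\<And>x z. x \<in> A \<Longrightarrow> z \<in> A \<Longrightarrow> \<bar>(x - z) \<bullet> w\<bar> \<le> (1/2) * norm w * norm (x - z)"
  shows "negligible A"
proof -
  define P where "P v = v - ((v \<bullet> w) / (w \<bullet> w)) *\<^sub>R w" for v
  have Pd: "P x - P z = P (x - z)" for x z
    by (simp add: P_def inner_diff_left algebra_simps diff_divide_distrib)
  have key: "norm (x - z) \<le> 2 * norm (P x - P z)" if "x \<in> A" "z \<in> A" for x z
  proof -
    have "norm (x - z) \<le> 2 * norm (P (x - z))"
      unfolding P_def by (rule proj_norm[OF w cone[OF that]])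
    then show ?thesis by (simp only: Pd)
  qed
  have inj: "inj_on P A"
  proof (rule inj_onI)
    fix x z assume "x \<in> A" "z \<in> A" "P x = P z"
    then show "x = z" using key[of x z] by simp
  qed
  have hyp: "P ` A \<subseteq> {v. w \<bullet> v = 0}"
    using w by (auto simp: P_def inner_diff_right inner_commute)
  have negP: "negligible (P ` A)"
    using negligible_subset[OF negligible_hyperplane[of w 0] hyp] w by simp
  define g where "g = inv_into A P"
  have gA: "g ` (P ` A) = A" unfolding g_def using inv_into_image_cancel[OF inj order_refl] .
  have "negligible (g ` (P ` A))"
  proof (rule negligible_locally_Lipschitz_image[OF order_refl negP])
    fix y assume y: "y \<in> P ` A"
    show "\<exists>T B. open T \<and> y \<in> T \<and> (\<forall>y'\<in>P ` A \<inter> T. norm (g y' - g y) \<le> B * norm (y' - y))"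
    proof (intro exI[of _ UNIV] exI[of _ 2] conjI ballI)
      fix y' assume "y' \<in> P ` A \<inter> UNIV"
      then obtain x' where x': "x' \<in> A" "y' = P x'" by auto
      obtain x where x: "x \<in> A" "y = P x" using y by auto
      have "g y' = x'" "g y = x" using x x' inj by (auto simp: g_def)
      then show "norm (g y' - g y) \<le> 2 * norm (y' - y)" using key[OF x'(1) x(1)] x x' by simp
    qed auto
  qed
  then show ?thesis using gA by simp
qed

lemma dir_nonneg:
  fixes h :: "'a::euclidean_space \<Rightarrow> real"
  assumes d: "(h has_derivative (\<lambda>v. v \<bullet> g)) (at y)" and T: "T > 0"
    and inS: "\<And>t. 0 < t \<Longrightarrow> t < T \<Longrightarrow> h y \<le> h (y + t *\<^sub>R v)"
  shows "v \<bullet> g \<ge> 0"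
proof (rule ccontr)
  assume "\<not> v \<bullet> g \<ge> 0"
  then have neg: "v \<bullet> g < 0" by simp
  have l: "((\<lambda>t::real. y + t *\<^sub>R v) has_derivative (\<lambda>t. t *\<^sub>R v)) (at 0)"
    by (auto intro!: derivative_eq_intros)
  have d0: "(h has_derivative (\<lambda>v. v \<bullet> g)) (at (y + 0 *\<^sub>R v))" using d by simp
  have "((\<lambda>t. h (y + t *\<^sub>R v)) has_derivative (\<lambda>t. (t *\<^sub>R v) \<bullet> g)) (at 0)"
    using has_derivative_compose[OF l d0] by simp
  moreover have "(\<lambda>t. (t *\<^sub>R v) \<bullet> g) = (*) (v \<bullet> g)" by (auto simp: mult.commute)
  ultimately have "DERIV (\<lambda>t. h (y + t *\<^sub>R v)) 0 :> v \<bullet> g"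
    by (simp add: has_field_derivative_def)
  from DERIV_neg_dec_right[OF this neg] obtain dd where dd: "dd > 0"
    "\<And>t. t > 0 \<Longrightarrow> t < dd \<Longrightarrow> h (y + 0 *\<^sub>R v) > h (y + (0 + t) *\<^sub>R v)" by blast
  define t where "t = min dd T / 2"
  have t: "t > 0" "t < dd" "t < T" using dd(1) T by (auto simp: t_def)
  show False using dd(2)[OF t(1,2)] inS[OF t(1,3)] by simp
qed

lemma lagrange:
  fixes h :: "'a::euclidean_space \<Rightarrow> real"
  assumes d: "(h has_derivative (\<lambda>v. v \<bullet> g)) (at y)" and r: "r > 0" and y: "y \<in> cball c r"
    and mn: "\<And>z. z \<in> cball c r \<Longrightarrow> h y \<le> h z"
  shows "g = 0 \<or> (norm (y - c) = r \<and> (\<exists>l. g = l *\<^sub>R (y - c)))"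
proof -
  define a where "a = y - c"
  have na: "norm a \<le> r" using y by (simp add: a_def dist_norm norm_minus_commute)
  show ?thesis
  proof (cases "norm a < r")
    case True
    define v where "v = - g"
    define T where "T = (r - norm a) / (norm v + 1)"
    have nv: "norm v + 1 > 0" by (simp add: add_nonneg_pos)
    then have T: "T > 0" using True by (simp add: T_def)
    have "h y \<le> h (y + t *\<^sub>R v)" if t: "0 < t" "t < T" for t
    proof (rule mn)
      have "t * norm v \<le> t * (norm v + 1)" using t by simp
      also have "\<dots> < T * (norm v + 1)" using t nv by (intro mult_strict_right_mono) auto
      also have "\<dots> = r - norm a" using nv by (simp add: T_def)
      finally have tv: "t * norm v < r - norm a" .
      have "norm (a + t *\<^sub>R v) \<le> norm a + t * norm v"
        using norm_triangle_ineq[of a "t *\<^sub>R v"] t by simp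
      then have "norm (a + t *\<^sub>R v) \<le> r" using tv by linarith
      then show "y + t *\<^sub>R v \<in> cball c r"
        by (simp add: a_def dist_norm norm_minus_commute algebra_simps)
    qed
    then have "v \<bullet> g \<ge> 0" using dir_nonneg[OF d T] by blast
    then have "g \<bullet> g \<le> 0" by (simp add: v_def)
    then have "g = 0" by (metis inner_gt_zero_iff not_le)
    then show ?thesis by simp
  next
    case False
    then have nar: "norm a = r" using na by simp
    have a0: "a \<noteq> 0" using nar r by auto
    have aa: "a \<bullet> a = r\<^sup>2" using nar by (metis power2_norm_eq_inner)
    have key: "v \<bullet> g \<ge> 0" if av: "a \<bullet> v < 0" for v
    proof -
      define T where "T = - 2 * (a \<bullet> v) / (v \<bullet> v + 1)"
      have vv: "v \<bullet> v \<ge> 0" by simp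
      have vv1: "v \<bullet> v + 1 > 0" using vv by linarith
      have T: "T > 0" unfolding T_def using av vv1 by (intro divide_pos_pos) auto
      have "h y \<le> h (y + t *\<^sub>R v)" if t: "0 < t" "t < T" for t
      proof (rule mn)
        have "t * (v \<bullet> v) \<le> t * (v \<bullet> v + 1)" using t by simp
        also have "\<dots> < T * (v \<bullet> v + 1)" using t vv1 by (intro mult_strict_right_mono) auto
        also have "\<dots> = - 2 * (a \<bullet> v)" using vv1 by (simp add: T_def)
        finally have tv: "t * (v \<bullet> v) < - 2 * (a \<bullet> v)" .
        have "(a + t *\<^sub>R v) \<bullet> (a + t *\<^sub>R v) = a \<bullet> a + t * (2 * (a \<bullet> v) + t * (v \<bullet> v))"
        proof -
          have "(a + t *\<^sub>R v) \<bullet> (a + t *\<^sub>R v) = a \<bullet> a + t * (a \<bullet> v) + t * (v \<bullet> a) + t * t * (v \<bullet> v)"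
            by (simp add: inner_add_left inner_add_right algebra_simps)
          also have "v \<bullet> a = a \<bullet> v" by (rule inner_commute)
          finally show ?thesis by (simp add: algebra_simps)
        qed
        also have "\<dots> \<le> a \<bullet> a"
        proof -
          have "2 * (a \<bullet> v) + t * (v \<bullet> v) \<le> 0" using tv by linarith
          then have "t * (2 * (a \<bullet> v) + t * (v \<bullet> v)) \<le> 0" using t by (simp add: mult_nonneg_nonpos)
          then show ?thesis by linarith
        qed
        finally have i1: "(a + t *\<^sub>R v) \<bullet> (a + t *\<^sub>R v) \<le> a \<bullet> a" .
        have "(norm (a + t *\<^sub>R v))\<^sup>2 = (a + t *\<^sub>R v) \<bullet> (a + t *\<^sub>R v)"
          by (rule power2_norm_eq_inner)
        then have "(norm (a + t *\<^sub>R v))\<^sup>2 \<le> r\<^sup>2" using i1 aa by linarith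
        then have "norm (a + t *\<^sub>R v) \<le> r" by (rule power2_le_imp_le) (use r in auto)
        then show "y + t *\<^sub>R v \<in> cball c r"
          by (simp add: a_def dist_norm norm_minus_commute algebra_simps)
      qed
      then show ?thesis using dir_nonneg[OF d T] by blast
    qed
    define l where "l = (g \<bullet> a) / (a \<bullet> a)"
    define gp where "gp = g - l *\<^sub>R a"
    have aa0: "a \<bullet> a > 0" using a0 by simp
    have gpa: "a \<bullet> gp = 0" using aa0 by (simp add: gp_def l_def inner_diff_right inner_commute)
    have gpa': "gp \<bullet> a = 0" using gpa by (simp add: inner_commute)
    have "gp = 0"
    proof (rule ccontr)
      assume gp0: "gp \<noteq> 0"
      have gg: "gp \<bullet> gp > 0" using gp0 by simp
      define k where "k = (\<bar>l\<bar> * (a \<bullet> a) + 1) / (gp \<bullet> gp)"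
      define v where "v = - (k *\<^sub>R gp) - a"
      have "a \<bullet> v = - (a \<bullet> a)" using gpa by (simp add: v_def inner_diff_right)
      then have "a \<bullet> v < 0" using aa0 by simp
      then have "v \<bullet> g \<ge> 0" by (rule key)
      moreover have "v \<bullet> g = - k * (gp \<bullet> gp) - l * (a \<bullet> a)"
      proof -
        have g: "g = l *\<^sub>R a + gp" by (simp add: gp_def)
        have "v \<bullet> g = (- (k *\<^sub>R gp) - a) \<bullet> (l *\<^sub>R a + gp)" by (simp add: v_def g[symmetric])
        also have "\<dots> = - k * (gp \<bullet> gp) - l * (a \<bullet> a)"
          using gpa gpa' by (simp add: inner_add_right inner_diff_left algebra_simps)
        finally show ?thesis .
      qed
      moreover have "k * (gp \<bullet> gp) = \<bar>l\<bar> * (a \<bullet> a) + 1" using gg by (simp add: k_def)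
      moreover have "- (l * (a \<bullet> a)) \<le> \<bar>l\<bar> * (a \<bullet> a)"
      proof -
        have "(- l) * (a \<bullet> a) \<le> \<bar>l\<bar> * (a \<bullet> a)" using aa0 by (intro mult_right_mono) auto
        then show ?thesis by simp
      qed
      ultimately show False by linarith
    qed
    then have "g = l *\<^sub>R (y - c)" by (simp add: gp_def a_def)
    then show ?thesis using nar a_def by blast
  qed
qed

lemma gderiv_unique:
  fixes h :: "'a::euclidean_space \<Rightarrow> real"
  assumes "(h has_derivative (\<lambda>v. v \<bullet> a)) (at y)" "(h has_derivative (\<lambda>v. v \<bullet> b)) (at y)"
  shows "a = b"
proof -
  have "(\<lambda>v. v \<bullet> a) = (\<lambda>v. v \<bullet> b)" using has_derivative_unique[OF assms] .
  then have "(a - b) \<bullet> a = (a - b) \<bullet> b" by metis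
  then have "(a - b) \<bullet> (a - b) = 0" by (simp add: inner_diff_right)
  then show ?thesis by simp
qed

locale L54 =
  fixes \<psi> h f :: "'a::euclidean_space \<Rightarrow> real"
  assumes sp: "smooth_on (ball 0 2) \<psi>" and sh: "smooth_on (ball 0 2) h"
    and psi: "\<forall>x\<in>ball 0 2. 0 < \<psi> x \<and> \<psi> x < 1/2"
    and hpos: "\<forall>x\<in>ball 0 2. h x \<ge> 0"
    and fdef: "\<And>x. f x = (INF y\<in>cball x (\<psi> x). h y)"
begin

definition "G x e = h (x + \<psi> x *\<^sub>R e)"
definition "DG x e = gradf h (x + \<psi> x *\<^sub>R e) + (gradf h (x + \<psi> x *\<^sub>R e) \<bullet> e) *\<^sub>R gradf \<psi> x"
definition "Dset x = {DG x e | e. e \<in> cball 0 1 \<and> G x e = f x}"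

lemma hder: "y \<in> ball 0 2 \<Longrightarrow> (h has_derivative (\<lambda>v. v \<bullet> gradf h y)) (at y)"
  using smooth_grad(1)[OF sh] by auto
lemma psider: "y \<in> ball 0 2 \<Longrightarrow> (\<psi> has_derivative (\<lambda>v. v \<bullet> gradf \<psi> y)) (at y)"
  using smooth_grad(1)[OF sp] by auto
lemma hcont: "continuous_on (ball 0 2) h"
  using hder has_derivative_continuous continuous_at_imp_continuous_on by blast
lemma psicont: "continuous_on (ball 0 2) \<psi>"
  using psider has_derivative_continuous continuous_at_imp_continuous_on by blast
lemma ghcont: "continuous_on (ball 0 2) (gradf h)"
  using smooth_grad(2)[OF sh] by auto
lemma gpsicont: "continuous_on (ball 0 2) (gradf \<psi>)"
  using smooth_grad(2)[OF sp] by auto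

lemma pt_in:
  assumes "x \<in> cball 0 1" "e \<in> cball 0 1"
  shows "x + \<psi> x *\<^sub>R e \<in> ball 0 2"
proof -
  have x2: "x \<in> ball 0 2" using assms by auto
  then have p: "0 < \<psi> x" "\<psi> x < 1/2" using psi by auto
  have "norm (\<psi> x *\<^sub>R e) = \<psi> x * norm e" using p by simp
  also have "\<dots> \<le> \<psi> x" using p assms(2) by (simp add: mult_left_le)
  finally have "norm (x + \<psi> x *\<^sub>R e) \<le> norm x + \<psi> x"
    using norm_triangle_ineq[of x "\<psi> x *\<^sub>R e"] by linarith
  then show ?thesis using assms(1) p by simp
qed

lemma cball_sub:
  assumes "x \<in> ball 0 1"
  shows "cball x (\<psi> x) \<subseteq> ball 0 2"
proof
  fix y assume y: "y \<in> cball x (\<psi> x)"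
  have "\<psi> x < 1/2" using psi assms by auto
  then have "norm y \<le> norm x + \<psi> x"
    using y norm_triangle_ineq[of x "y - x"] by (auto simp: dist_norm norm_minus_commute)
  then show "y \<in> ball 0 2" using assms \<open>\<psi> x < 1/2\<close> by simp
qed

lemma f_le_h:
  assumes "x \<in> ball 0 1" "y \<in> cball x (\<psi> x)"
  shows "f x \<le> h y"
proof -
  have "bdd_below (h ` cball x (\<psi> x))"
    using cball_sub[OF assms(1)] hpos by (auto intro!: bdd_belowI[where m=0])
  then show ?thesis unfolding fdef using assms(2) by (simp add: cINF_lower)
qed

lemma f_le_G:
  assumes "x \<in> ball 0 1" "e \<in> cball 0 1"
  shows "f x \<le> G x e"
proof -
  have p: "0 < \<psi> x" using psi assms by auto
  have "x + \<psi> x *\<^sub>R e \<in> cball x (\<psi> x)"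
    using assms(2) p by (simp add: dist_norm mult_left_le)
  then show ?thesis unfolding G_def using f_le_h assms(1) by blast
qed

lemma f_attained:
  assumes "x \<in> ball 0 1"
  shows "\<exists>y\<in>cball x (\<psi> x). f x = h y"
proof -
  have c: "continuous_on (cball x (\<psi> x)) h"
    using hcont cball_sub[OF assms] continuous_on_subset by blast
  have "0 < \<psi> x" using psi assms by auto
  then have ne: "cball x (\<psi> x) \<noteq> {}" by simp
  from c ne obtain y where y: "y \<in> cball x (\<psi> x)" "\<forall>z\<in>cball x (\<psi> x). h y \<le> h z"
    using continuous_attains_inf[OF compact_cball ne c] by blast
  have "f x = h y" unfolding fdef
    by (rule cInf_eq_minimum) (use y in auto)
  then show ?thesis using y by blast
qed

lemma G_attained:
  assumes "x \<in> ball 0 1"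
  shows "\<exists>e\<in>cball 0 1. G x e = f x"
proof -
  obtain y where y: "y\<in>cball x (\<psi> x)" "f x = h y" using f_attained[OF assms] by blast
  have p: "0 < \<psi> x" using psi assms by auto
  define e where "e = (1 / \<psi> x) *\<^sub>R (y - x)"
  have "x + \<psi> x *\<^sub>R e = y" using p by (simp add: e_def)
  moreover have "norm e \<le> 1" using p y(1)
    by (simp add: e_def dist_norm norm_minus_commute divide_simps)
  ultimately show ?thesis using y by (auto simp: G_def)
qed

lemma G_deriv:
  assumes "x \<in> cball 0 1" "e \<in> cball 0 1"
  shows "((\<lambda>z. G z e) has_derivative (\<lambda>v. v \<bullet> DG x e)) (at x)"
proof -
  have x2: "x \<in> ball 0 2" using assms by auto
  have d1: "((\<lambda>z. z + \<psi> z *\<^sub>R e) has_derivative (\<lambda>v. v + (v \<bullet> gradf \<psi> x) *\<^sub>R e)) (at x)"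
    by (auto intro!: derivative_eq_intros psider[OF x2])
  have "((\<lambda>z. h (z + \<psi> z *\<^sub>R e)) has_derivative
      (\<lambda>v. (v + (v \<bullet> gradf \<psi> x) *\<^sub>R e) \<bullet> gradf h (x + \<psi> x *\<^sub>R e))) (at x)"
    using has_derivative_compose[OF d1 hder[OF pt_in[OF assms]]] by simp
  moreover have "(\<lambda>v. (v + (v \<bullet> gradf \<psi> x) *\<^sub>R e) \<bullet> gradf h (x + \<psi> x *\<^sub>R e)) = (\<lambda>v. v \<bullet> DG x e)"
    by (auto simp: DG_def inner_add_left inner_add_right algebra_simps inner_commute)
  ultimately show ?thesis by (simp add: G_def)
qed

definition "K = cball (0::'a) 1 \<times> cball (0::'a) 1"

lemma K_compact: "compact K" unfolding K_def by (intro compact_Times compact_cball)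

lemma pt_cont: "continuous_on K (\<lambda>q. fst q + \<psi> (fst q) *\<^sub>R snd q)"
proof -
  have "continuous_on K (\<lambda>q. \<psi> (fst q))"
    by (rule continuous_on_compose2[OF psicont continuous_on_fst]) (auto simp: K_def)
  then show ?thesis by (intro continuous_intros) auto
qed

lemma pt_K: "q \<in> K \<Longrightarrow> fst q + \<psi> (fst q) *\<^sub>R snd q \<in> ball 0 2"
  using pt_in by (auto simp: K_def)

lemma G_cont: "continuous_on K (\<lambda>q. G (fst q) (snd q))"
  unfolding G_def by (rule continuous_on_compose2[OF hcont pt_cont]) (use pt_K in auto)

lemma DG_cont: "continuous_on K (\<lambda>q. DG (fst q) (snd q))"
proof -
  have a: "continuous_on K (\<lambda>q. gradf h (fst q + \<psi> (fst q) *\<^sub>R snd q))"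
    by (rule continuous_on_compose2[OF ghcont pt_cont]) (use pt_K in auto)
  have b: "continuous_on K (\<lambda>q. gradf \<psi> (fst q))"
    by (rule continuous_on_compose2[OF gpsicont continuous_on_fst]) (auto simp: K_def)
  show ?thesis unfolding DG_def using a b by (intro continuous_intros) auto
qed

lemma unif_est:
  assumes "\<epsilon> > 0"
  shows "\<exists>r>0. \<forall>x z e. x \<in> ball 0 1 \<longrightarrow> z \<in> ball 0 1 \<longrightarrow> e \<in> cball 0 1 \<longrightarrow> norm (z - x) < r \<longrightarrow>
            \<bar>G z e - G x e - (z - x) \<bullet> DG x e\<bar> \<le> \<epsilon> * norm (z - x)"
proof -
  have "uniformly_continuous_on K (\<lambda>q. DG (fst q) (snd q))"
    using compact_uniformly_continuous[OF DG_cont K_compact] .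
  then obtain r where r: "r > 0" and
    ru: "\<And>q q'. q \<in> K \<Longrightarrow> q' \<in> K \<Longrightarrow> dist q' q < r \<Longrightarrow> dist (DG (fst q') (snd q')) (DG (fst q) (snd q)) < \<epsilon>"
    using assms unfolding uniformly_continuous_on_def by metis
  show ?thesis
  proof (intro exI[of _ r] conjI allI impI)
    show "r > 0" by fact
    fix x z e :: 'a
    assume x: "x \<in> ball 0 1" and z: "z \<in> ball 0 1" and e: "e \<in> cball 0 1" and xz: "norm (z - x) < r"
    define S where "S = ball (0::'a) 1 \<inter> ball x r"
    have cS: "convex S" unfolding S_def by (intro convex_Int convex_ball)
    have xS: "x \<in> S" using x r by (simp add: S_def)
    have zS: "z \<in> S" using z xz by (simp add: S_def dist_norm norm_minus_commute)
    have seg: "x + t *\<^sub>R (z - x) \<in> S" if "t \<in> {0..1}" for t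
    proof -
      have "x + t *\<^sub>R (z - x) = (1 - t) *\<^sub>R x + t *\<^sub>R z" by (simp add: algebra_simps)
      then show ?thesis using convexD_alt[OF cS xS zS, of t] that by simp
    qed
    have der: "((\<lambda>v. G v e) has_derivative (\<lambda>v. v \<bullet> DG w e)) (at w within S)" if "w \<in> S" for w
      using G_deriv[of w e] that e has_derivative_at_withinI by (auto simp: S_def)
    have bnd: "onorm ((\<lambda>v. v \<bullet> DG w e) - (\<lambda>v. v \<bullet> DG x e)) \<le> \<epsilon>" if "w \<in> S" for w
    proof (rule onorm_le)
      fix v :: 'a
      have "dist (w, e) (x, e) < r" using that by (simp add: S_def dist_Pair_Pair dist_commute)
      then have "dist (DG w e) (DG x e) < \<epsilon>"
        using ru[of "(x,e)" "(w,e)"] that x e by (auto simp: K_def S_def)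
      then have n: "norm (DG w e - DG x e) \<le> \<epsilon>" by (simp add: dist_norm)
      have "norm (((\<lambda>v. v \<bullet> DG w e) - (\<lambda>v. v \<bullet> DG x e)) v) = \<bar>v \<bullet> (DG w e - DG x e)\<bar>"
        by (simp add: inner_diff_right)
      also have "\<dots> \<le> norm v * norm (DG w e - DG x e)" by (rule Cauchy_Schwarz_ineq2)
      also have "\<dots> \<le> \<epsilon> * norm v" using n by (metis mult.commute mult_left_mono norm_ge_zero)
      finally show "norm (((\<lambda>v. v \<bullet> DG w e) - (\<lambda>v. v \<bullet> DG x e)) v) \<le> \<epsilon> * norm v" .
    qed
    have "norm (G z e - G x e - (z - x) \<bullet> DG x e) \<le> norm (z - x) * \<epsilon>"
      by (rule differentiable_bound_linearization[where S=S and f'="\<lambda>w v. v \<bullet> DG w e", OF seg der bnd xS])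
    then show "\<bar>G z e - G x e - (z - x) \<bullet> DG x e\<bar> \<le> \<epsilon> * norm (z - x)" by (simp add: mult.commute)
  qed
qed

lemma mono_est:
  assumes hr: "\<forall>x z e. x \<in> ball 0 1 \<longrightarrow> z \<in> ball 0 1 \<longrightarrow> e \<in> cball 0 1 \<longrightarrow> norm (z - x) < r \<longrightarrow>
            \<bar>G z e - G x e - (z - x) \<bullet> DG x e\<bar> \<le> \<epsilon> * norm (z - x)"
    and x: "x \<in> ball 0 1" and z: "z \<in> ball 0 1" and xz: "norm (z - x) < r"
    and a: "a \<in> Dset x" and b: "b \<in> Dset z"
  shows "(x - z) \<bullet> (a - b) \<le> 2 * \<epsilon> * norm (x - z)"
proof -
  obtain e where e: "e \<in> cball 0 1" "G x e = f x" "a = DG x e" using a by (auto simp: Dset_def)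
  obtain e' where e': "e' \<in> cball 0 1" "G z e' = f z" "b = DG z e'" using b by (auto simp: Dset_def)
  have zx: "norm (x - z) < r" using xz by (simp add: norm_minus_commute)
  have 1: "f z \<le> G z e" using f_le_G z e by blast
  have 2: "G z e - G x e - (z - x) \<bullet> a \<le> \<epsilon> * norm (z - x)"
    using hr x z e xz by force
  have 3: "f x \<le> G x e'" using f_le_G x e' by blast
  have 4: "G x e' - G z e' - (x - z) \<bullet> b \<le> \<epsilon> * norm (x - z)"
    using hr x z e' zx by force
  have 5: "(z - x) \<bullet> a = - ((x - z) \<bullet> a)" by (simp add: inner_diff_left)
  have 6: "(x - z) \<bullet> (a - b) = (x - z) \<bullet> a - (x - z) \<bullet> b" by (simp add: inner_diff_right)
  have 7: "norm (z - x) = norm (x - z)" by (simp add: norm_minus_commute)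
  have 8: "2 * \<epsilon> * norm (x - z) = 2 * (\<epsilon> * norm (x - z))" by simp
  have 9: "\<epsilon> * norm (z - x) = \<epsilon> * norm (x - z)" by (simp add: norm_minus_commute)
  show ?thesis using 1 2 3 4 5 6 7 8 9 e(2) e'(2) by linarith
qed

lemma N_negligible: "negligible {x \<in> ball 0 1. \<exists>a\<in>Dset x. \<exists>b\<in>Dset x. a \<noteq> b}"
proof -
  obtain Q :: "'a set" where Qc: "countable Q" and Qd: "\<And>X. open X \<Longrightarrow> X \<noteq> {} \<Longrightarrow> \<exists>d\<in>Q. d \<in> X"
    using countable_dense_exists by blast
  define ep :: "nat \<Rightarrow> real" where "ep m = 1 / real (Suc m)" for m
  have ep_pos: "ep m > 0" for m by (simp add: ep_def)
  define est where "est r \<epsilon> \<longleftrightarrow> (\<forall>x z e. x \<in> ball 0 1 \<longrightarrow> z \<in> ball 0 1 \<longrightarrow> e \<in> cball 0 1 \<longrightarrow> norm (z - x) < r \<longrightarrow>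
            \<bar>G z e - G x e - (z - x) \<bullet> DG x e\<bar> \<le> \<epsilon> * norm (z - x))" for r \<epsilon>
  have "\<forall>m. \<exists>r. r > 0 \<and> est r (ep m)"
    using unif_est ep_pos unfolding est_def by blast
  then obtain R where R: "\<And>m. R m > 0 \<and> est (R m) (ep m)"
    by (rule choice[THEN exE]) blast
  have Rpos: "\<And>m. R m > 0" using R by blast
  have hR: "\<And>m. \<forall>x z e. x \<in> ball 0 1 \<longrightarrow> z \<in> ball 0 1 \<longrightarrow> e \<in> cball 0 1 \<longrightarrow> norm (z - x) < R m \<longrightarrow>
            \<bar>G z e - G x e - (z - x) \<bullet> DG x e\<bar> \<le> ep m * norm (z - x)"
    using R unfolding est_def by blast
  define piece :: "'a \<times> 'a \<times> nat \<times> 'a \<Rightarrow> 'a set" where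
    "piece = (\<lambda>(c, c', m, x0). {x \<in> ball 0 1 \<inter> ball x0 (R m / 2).
        \<exists>a\<in>Dset x. \<exists>b\<in>Dset x. norm (a - c) < ep m \<and> norm (b - c') < ep m})"
  define I where "I = {(c, c', m, x0). c \<in> Q \<and> c' \<in> Q \<and> x0 \<in> Q \<and> 16 * ep m \<le> norm (c - c')}"
  have "countable I"
  proof (rule countable_subset)
    show "I \<subseteq> Q \<times> Q \<times> (UNIV :: nat set) \<times> Q" by (auto simp: I_def)
    show "countable (Q \<times> Q \<times> (UNIV :: nat set) \<times> Q)" using Qc by auto
  qed
  have negp: "negligible (piece i)" if "i \<in> I" for i
  proof -
    obtain c c' m x0 where i: "i = (c, c', m, x0)" by (cases i) auto
    have big: "16 * ep m \<le> norm (c - c')" using that by (simp add: I_def i)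
    then have w: "c - c' \<noteq> 0" using ep_pos[of m] by auto
    show ?thesis unfolding i
    proof (rule graph_negligible[OF w])
      fix x z assume xP: "x \<in> piece (c, c', m, x0)" and zP: "z \<in> piece (c, c', m, x0)"
      obtain px qx where x: "x \<in> ball 0 1" "dist x0 x < R m / 2" "px \<in> Dset x" "qx \<in> Dset x"
        "norm (px - c) < ep m" "norm (qx - c') < ep m"
        using xP by (auto simp: piece_def)
      obtain pz qz where z: "z \<in> ball 0 1" "dist x0 z < R m / 2" "pz \<in> Dset z" "qz \<in> Dset z"
        "norm (pz - c) < ep m" "norm (qz - c') < ep m"
        using zP by (auto simp: piece_def)
      have d: "norm (z - x) < R m"
        using x(2) z(2) dist_triangle[of z x x0] by (simp add: dist_norm dist_commute norm_minus_commute)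
      have d': "norm (x - z) < R m" using d by (simp add: norm_minus_commute)
      have m1: "(x - z) \<bullet> (px - qz) \<le> 2 * ep m * norm (x - z)"
        by (rule mono_est[OF hR x(1) z(1) d x(3) z(4)])
      have m2: "(z - x) \<bullet> (pz - qx) \<le> 2 * ep m * norm (z - x)"
        by (rule mono_est[OF hR z(1) x(1) d' z(3) x(4)])
      let ?u = "x - z"
      have cs: "\<bar>?u \<bullet> v\<bar> \<le> ep m * norm ?u" if "norm v < ep m" for v
      proof -
        have "\<bar>?u \<bullet> v\<bar> \<le> norm ?u * norm v" by (rule Cauchy_Schwarz_ineq2)
        also have "\<dots> \<le> norm ?u * ep m" using that by (intro mult_left_mono) auto
        finally show ?thesis by (simp add: mult.commute)
      qed
      have e1: "?u \<bullet> (c - c') = ?u \<bullet> (px - qz) - ?u \<bullet> (px - c) + ?u \<bullet> (qz - c')"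
        by (simp add: inner_diff_right)
      have e2: "?u \<bullet> (c - c') = - ((z - x) \<bullet> (pz - qx)) - ?u \<bullet> (pz - c) + ?u \<bullet> (qx - c')"
        by (simp add: inner_diff_right inner_diff_left)
      have n: "norm (z - x) = norm ?u" by (simp add: norm_minus_commute)
      have f1: "2 * ep m * norm ?u = 2 * (ep m * norm ?u)" "4 * ep m * norm ?u = 4 * (ep m * norm ?u)"
        "2 * ep m * norm (z - x) = 2 * (ep m * norm ?u)" using n by simp_all
      have "\<bar>?u \<bullet> (c - c')\<bar> \<le> 4 * ep m * norm ?u"
        unfolding abs_le_iff
        using m1 m2 e1 e2 f1 cs[OF x(5)] cs[OF x(6)] cs[OF z(5)] cs[OF z(6)] by linarith
      also have "\<dots> \<le> (1/2) * norm (c - c') * norm ?u"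
        using big ep_pos[of m] by (intro mult_right_mono) auto
      finally show "\<bar>(x - z) \<bullet> (c - c')\<bar> \<le> 1 / 2 * norm (c - c') * norm (x - z)" .
    qed
  qed
  have cover: "{x \<in> ball 0 1. \<exists>a\<in>Dset x. \<exists>b\<in>Dset x. a \<noteq> b} \<subseteq> \<Union> (piece ` I)"
  proof
    fix x assume "x \<in> {x \<in> ball 0 1. \<exists>a\<in>Dset x. \<exists>b\<in>Dset x. a \<noteq> b}"
    then obtain a b where x: "x \<in> ball 0 1" and ab: "a \<in> Dset x" "b \<in> Dset x" "a \<noteq> b" by auto
    define \<delta> where "\<delta> = norm (a - b)"
    have dpos: "\<delta> > 0" using ab(3) by (simp add: \<delta>_def)
    obtain m where m: "inverse (real (Suc m)) < \<delta> / 20" using reals_Archimedean[of "\<delta>/20"] dpos by auto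
    have "ep m = inverse (real (Suc m))" by (simp add: ep_def inverse_eq_divide)
    then have epm: "ep m < \<delta> / 20" using m by simp
    have "ball a (ep m) \<noteq> {}" using ep_pos[of m] by simp
    then obtain c where c: "c \<in> Q" "c \<in> ball a (ep m)" using Qd[of "ball a (ep m)"] by blast
    have "ball b (ep m) \<noteq> {}" using ep_pos[of m] by simp
    then obtain c' where c': "c' \<in> Q" "c' \<in> ball b (ep m)" using Qd[of "ball b (ep m)"] by blast
    have "ball x (R m / 2) \<noteq> {}" using Rpos[of m] by simp
    then obtain x0 where x0: "x0 \<in> Q" "x0 \<in> ball x (R m / 2)" using Qd[of "ball x (R m / 2)"] by blast
    have na: "norm (a - c) < ep m" using c by (simp add: dist_norm)
    have nb: "norm (b - c') < ep m" using c' by (simp add: dist_norm)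
    have "\<delta> \<le> norm (a - c) + norm (c - c') + norm (c' - b)"
      unfolding \<delta>_def
    proof -
      have "norm (a - b) = norm (((a - c) + (c - c')) + (c' - b))" by simp
      then have "norm (a - b) \<le> norm ((a - c) + (c - c')) + norm (c' - b)"
        using norm_triangle_ineq[of "(a - c) + (c - c')" "c' - b"] by linarith
      moreover have "norm ((a - c) + (c - c')) \<le> norm (a - c) + norm (c - c')"
        by (rule norm_triangle_ineq)
      ultimately show "norm (a - b) \<le> norm (a - c) + norm (c - c') + norm (c' - b)" by linarith
    qed
    moreover have "norm (c' - b) = norm (b - c')" by (simp add: norm_minus_commute)
    ultimately have "16 * ep m \<le> norm (c - c')" using na nb epm ep_pos[of m] by linarith
    then have "(c, c', m, x0) \<in> I" using c c' x0 by (simp add: I_def)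
    moreover have "x \<in> piece (c, c', m, x0)"
    proof -
      have "x \<in> ball x0 (R m / 2)" using x0(2) by (simp add: dist_commute)
      have "x \<in> ball 0 1 \<inter> ball x0 (R m / 2) \<and> (\<exists>a\<in>Dset x. \<exists>b\<in>Dset x. norm (a - c) < ep m \<and> norm (b - c') < ep m)"
        using x ab(1,2) na nb \<open>x \<in> ball x0 (R m / 2)\<close> by blast
      then show ?thesis by (simp add: piece_def)
    qed
    ultimately show "x \<in> \<Union> (piece ` I)" by blast
  qed
  have "negligible (\<Union> (piece ` I))"
    using negp \<open>countable I\<close> by (intro negligible_countable_Union) auto
  then show ?thesis using cover negligible_subset by blast
qed

lemma usc:
  assumes x: "x \<in> ball 0 1" and Dx: "Dset x = {p}" and eta: "\<eta> > 0"
  shows "\<exists>d>0. \<forall>z e'. z \<in> ball 0 1 \<longrightarrow> norm (z - x) < d \<longrightarrow> e' \<in> cball 0 1 \<longrightarrow> G z e' = f z \<longrightarrow>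
           norm (DG z e' - p) < \<eta>"
proof -
  define Kx where "Kx = cball (0::'a) 1 \<inter> (\<lambda>e. norm (DG x e - p)) -` {\<eta>/2..}"
  have xK: "(x, e) \<in> K" if "e \<in> cball 0 1" for e using x that by (simp add: K_def)
  have cDx: "continuous_on (cball 0 1) (\<lambda>e. DG x e)"
    by (rule continuous_on_compose2[OF DG_cont, of "cball 0 1" "\<lambda>e. (x, e)", simplified])
       (auto intro!: continuous_intros simp: xK)
  have cGx: "continuous_on (cball 0 1) (\<lambda>e. G x e)"
    by (rule continuous_on_compose2[OF G_cont, of "cball 0 1" "\<lambda>e. (x, e)", simplified])
       (auto intro!: continuous_intros simp: xK)
  have "closed Kx" unfolding Kx_def
    by (rule continuous_closed_preimage) (auto intro!: continuous_intros cDx)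
  then have cKx: "compact Kx" by (simp add: compact_eq_bounded_closed Kx_def bounded_Int)
  have "\<exists>\<kappa>>0. \<forall>e\<in>Kx. f x + 3 * \<kappa> \<le> G x e"
  proof (cases "Kx = {}")
    case True then show ?thesis by (intro exI[of _ 1]) auto
  next
    case False
    have "continuous_on Kx (\<lambda>e. G x e)" using cGx by (rule continuous_on_subset) (auto simp: Kx_def)
    then obtain e1 where e1: "e1 \<in> Kx" "\<And>e. e \<in> Kx \<Longrightarrow> G x e1 \<le> G x e"
      using continuous_attains_inf[OF cKx False] by blast
    have e1c: "e1 \<in> cball 0 1" and e1n: "norm (DG x e1 - p) \<ge> \<eta>/2" using e1(1) by (auto simp: Kx_def)
    have "G x e1 \<noteq> f x"
    proof
      assume "G x e1 = f x"
      then have "DG x e1 \<in> Dset x" using e1c by (auto simp: Dset_def)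
      then have "DG x e1 = p" using Dx by simp
      then show False using e1n eta by simp
    qed
    moreover have "f x \<le> G x e1" using f_le_G[OF x e1c] .
    ultimately have gt: "G x e1 > f x" by simp
    have eq: "f x + 3 * ((G x e1 - f x) / 3) = G x e1" by (simp add: field_simps)
    show ?thesis
      by (rule exI[of _ "(G x e1 - f x) / 3"]) (use gt e1(2) eq in fastforce)
  qed
  then obtain \<kappa> where kp: "\<kappa> > 0" and kK: "\<And>e. e \<in> Kx \<Longrightarrow> f x + 3 * \<kappa> \<le> G x e" by blast
  have "uniformly_continuous_on K (\<lambda>q. G (fst q) (snd q))"
    using compact_uniformly_continuous[OF G_cont K_compact] .
  then obtain d1 where d1: "d1 > 0" and
    u1: "\<And>q q'. q \<in> K \<Longrightarrow> q' \<in> K \<Longrightarrow> dist q' q < d1 \<Longrightarrow> dist (G (fst q') (snd q')) (G (fst q) (snd q)) < \<kappa>"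
    using kp unfolding uniformly_continuous_on_def by metis
  have "uniformly_continuous_on K (\<lambda>q. DG (fst q) (snd q))"
    using compact_uniformly_continuous[OF DG_cont K_compact] .
  then obtain d2 where d2: "d2 > 0" and
    u2: "\<And>q q'. q \<in> K \<Longrightarrow> q' \<in> K \<Longrightarrow> dist q' q < d2 \<Longrightarrow> dist (DG (fst q') (snd q')) (DG (fst q) (snd q)) < \<eta>/2"
    using eta unfolding uniformly_continuous_on_def by (metis half_gt_zero)
  obtain e0 where e0: "e0 \<in> cball 0 1" "G x e0 = f x" using G_attained[OF x] by blast
  show ?thesis
  proof (intro exI[of _ "min d1 d2"] conjI allI impI)
    show "min d1 d2 > 0" using d1 d2 by simp
    fix z e' assume z: "z \<in> ball 0 1" and zx: "norm (z - x) < min d1 d2" and e': "e' \<in> cball 0 1"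
      and Ge': "G z e' = f z"
    have dz: "dist (z, e) (x, e) < min d1 d2" for e using zx by (simp add: dist_Pair_Pair dist_norm)
    have zK: "(z, e) \<in> K" if "e \<in> cball 0 1" for e using z that by (simp add: K_def)
    have A: "\<bar>G z e - G x e\<bar> < \<kappa>" if "e \<in> cball 0 1" for e
      using u1[OF xK[OF that] zK[OF that]] dz[of e] by (simp add: dist_real_def)
    have B: "norm (DG z e - DG x e) < \<eta>/2" if "e \<in> cball 0 1" for e
      using u2[OF xK[OF that] zK[OF that]] dz[of e] by (simp add: dist_norm)
    have fz: "f z < f x + \<kappa>" using f_le_G[OF z e0(1)] A[OF e0(1)] e0(2) by linarith
    show "norm (DG z e' - p) < \<eta>"
    proof (rule ccontr)
      assume "\<not> norm (DG z e' - p) < \<eta>"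
      then have n1: "norm (DG z e' - p) \<ge> \<eta>" by simp
      have "norm (DG z e' - p) \<le> norm (DG z e' - DG x e') + norm (DG x e' - p)"
        using norm_triangle_ineq[of "DG z e' - DG x e'" "DG x e' - p"] by simp
      then have "norm (DG x e' - p) \<ge> \<eta>/2" using n1 B[OF e'] by linarith
      then have "e' \<in> Kx" using e' by (simp add: Kx_def)
      then have "f x + 3 * \<kappa> \<le> G x e'" by (rule kK)
      then show False using A[OF e'] Ge' fz kp by linarith
    qed
  qed
qed

lemma diff_at:
  assumes x: "x \<in> ball 0 1" and Dx: "Dset x = {p}"
  shows "GDERIV f x :> p"
  unfolding gderiv_def has_derivative_at_alt
proof (intro conjI allI impI)
  show "bounded_linear (\<lambda>h. h \<bullet> p)" by (rule bounded_linear_inner_left)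
  fix \<epsilon> :: real assume ep: "\<epsilon> > 0"
  obtain r where r: "r > 0" and hr: "\<forall>x z e. x \<in> ball 0 1 \<longrightarrow> z \<in> ball 0 1 \<longrightarrow> e \<in> cball 0 1 \<longrightarrow> norm (z - x) < r \<longrightarrow>
            \<bar>G z e - G x e - (z - x) \<bullet> DG x e\<bar> \<le> (\<epsilon>/2) * norm (z - x)"
    using unif_est[of "\<epsilon>/2"] ep by auto
  obtain d2 where d2: "d2 > 0" and hd2: "\<forall>z e'. z \<in> ball 0 1 \<longrightarrow> norm (z - x) < d2 \<longrightarrow> e' \<in> cball 0 1 \<longrightarrow> G z e' = f z \<longrightarrow>
           norm (DG z e' - p) < \<epsilon>/2"
    using usc[OF x Dx, of "\<epsilon>/2"] ep by auto
  define d where "d = min (min r d2) (1 - norm x)"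
  have dpos: "d > 0" using r d2 x by (simp add: d_def)
  obtain e0 where e0: "e0 \<in> cball 0 1" "G x e0 = f x" using G_attained[OF x] by blast
  have DGe0: "DG x e0 = p"
  proof -
    have "DG x e0 \<in> Dset x" using e0 by (auto simp: Dset_def)
    then show ?thesis using Dx by simp
  qed
  show "\<exists>d>0. \<forall>y. norm (y - x) < d \<longrightarrow> norm (f y - f x - (y - x) \<bullet> p) \<le> \<epsilon> * norm (y - x)"
  proof (intro exI[of _ d] conjI allI impI)
    show "d > 0" by fact
    fix y assume yx: "norm (y - x) < d"
    have "norm y \<le> norm x + norm (y - x)" using norm_triangle_ineq[of x "y - x"] by simp
    then have y: "y \<in> ball 0 1" using yx by (simp add: d_def)
    have yr: "norm (y - x) < r" and yd2: "norm (y - x) < d2" using yx by (auto simp: d_def)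
    have xyr: "norm (x - y) < r" using yr by (simp add: norm_minus_commute)
    let ?N = "norm (y - x)"
    have nn: "norm (x - y) = ?N" by (simp add: norm_minus_commute)
    have up1: "f y \<le> G y e0" using f_le_G[OF y e0(1)] .
    have a1: "\<bar>G y e0 - G x e0 - (y - x) \<bullet> DG x e0\<bar> \<le> (\<epsilon>/2) * ?N"
      using hr x y e0(1) yr by blast
    have up2: "G y e0 - G x e0 - (y - x) \<bullet> p \<le> (\<epsilon>/2) * ?N"
      using abs_le_D1[OF a1] unfolding DGe0 .
    obtain e' where e': "e' \<in> cball 0 1" "G y e' = f y" using G_attained[OF y] by blast
    have lo1: "f x \<le> G x e'" using f_le_G[OF x e'(1)] .
    have a2: "\<bar>G x e' - G y e' - (x - y) \<bullet> DG y e'\<bar> \<le> (\<epsilon>/2) * norm (x - y)"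
      using hr x y e'(1) xyr by blast
    have lo2: "G x e' - G y e' - (x - y) \<bullet> DG y e' \<le> (\<epsilon>/2) * ?N"
      using abs_le_D1[OF a2] unfolding nn .
    have bn: "norm (DG y e' - p) < \<epsilon>/2" using hd2 y yd2 e' by blast
    have cs: "\<bar>(y - x) \<bullet> (DG y e' - p)\<bar> \<le> (\<epsilon>/2) * ?N"
    proof -
      have "\<bar>(y - x) \<bullet> (DG y e' - p)\<bar> \<le> ?N * norm (DG y e' - p)" by (rule Cauchy_Schwarz_ineq2)
      also have "\<dots> \<le> ?N * (\<epsilon>/2)" using bn by (intro mult_left_mono) auto
      finally show ?thesis by (simp add: mult.commute)
    qed
    have i1: "(x - y) \<bullet> DG y e' = - ((y - x) \<bullet> p) - (y - x) \<bullet> (DG y e' - p)"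
      by (simp add: inner_diff_left inner_diff_right)
    have fin: "\<epsilon> * ?N = (\<epsilon>/2) * ?N + (\<epsilon>/2) * ?N" by (simp add: field_simps)
    show "norm (f y - f x - (y - x) \<bullet> p) \<le> \<epsilon> * ?N"
      unfolding real_norm_def abs_le_iff
      using up1 up2 e0(2) lo1 lo2 e'(2) cs i1 fin unfolding abs_le_iff by linarith
  qed
qed

lemma main:
  "AE x in lebesgue. x \<in> ball 0 1 \<longrightarrow>
           (\<exists>Df. GDERIV f x :> Df \<and>
              (\<forall>y\<in>cball x (\<psi> x). f x = h y \<longrightarrow>
                 (\<forall>Dh D\<psi>. GDERIV h y :> Dh \<longrightarrow> GDERIV \<psi> x :> D\<psi> \<longrightarrow>
                    norm (Df - Dh) = norm Dh * norm D\<psi>)))"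
proof -
  let ?N = "{x \<in> ball 0 1. \<exists>a\<in>Dset x. \<exists>b\<in>Dset x. a \<noteq> b}"
  have good: "x \<in> ball 0 1 \<longrightarrow>
           (\<exists>Df. GDERIV f x :> Df \<and>
              (\<forall>y\<in>cball x (\<psi> x). f x = h y \<longrightarrow>
                 (\<forall>Dh D\<psi>. GDERIV h y :> Dh \<longrightarrow> GDERIV \<psi> x :> D\<psi> \<longrightarrow>
                    norm (Df - Dh) = norm Dh * norm D\<psi>)))" if nx: "x \<notin> ?N" for x
  proof
    assume x: "x \<in> ball 0 1"
    obtain e0 where e0: "e0 \<in> cball 0 1" "G x e0 = f x" using G_attained[OF x] by blast
    define p where "p = DG x e0"
    have "p \<in> Dset x" using e0 by (auto simp: Dset_def p_def)
    moreover have "\<forall>a\<in>Dset x. \<forall>b\<in>Dset x. a = b" using nx x by blast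
    ultimately have Dx: "Dset x = {p}" by blast
    have psx: "0 < \<psi> x" using psi x by auto
    show "\<exists>Df. GDERIV f x :> Df \<and>
              (\<forall>y\<in>cball x (\<psi> x). f x = h y \<longrightarrow>
                 (\<forall>Dh D\<psi>. GDERIV h y :> Dh \<longrightarrow> GDERIV \<psi> x :> D\<psi> \<longrightarrow>
                    norm (Df - Dh) = norm Dh * norm D\<psi>))"
    proof (intro exI[of _ p] conjI ballI impI allI)
      show "GDERIV f x :> p" by (rule diff_at[OF x Dx])
      fix y Dh D\<psi> assume y: "y \<in> cball x (\<psi> x)" and fy: "f x = h y"
        and dh: "GDERIV h y :> Dh" and dp: "GDERIV \<psi> x :> D\<psi>"
      have y2: "y \<in> ball 0 2" using cball_sub[OF x] y by blast
      have x2: "x \<in> ball 0 2" using x by auto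
      have Dh: "Dh = gradf h y"
        using gderiv_unique[OF hder[OF y2]] dh unfolding gderiv_def by (metis inner_commute)
      have Dp: "D\<psi> = gradf \<psi> x"
        using gderiv_unique[OF psider[OF x2]] dp unfolding gderiv_def by (metis inner_commute)
      define e where "e = (1 / \<psi> x) *\<^sub>R (y - x)"
      have ye: "x + \<psi> x *\<^sub>R e = y" using psx by (simp add: e_def)
      have ec: "e \<in> cball 0 1" using psx y
        by (simp add: e_def dist_norm norm_minus_commute divide_simps)
      have "G x e = f x" using ye fy by (simp add: G_def)
      then have "DG x e \<in> Dset x" using ec by (auto simp: Dset_def)
      then have pe: "p = DG x e" using Dx by simp
      have pd: "p - Dh = (gradf h y \<bullet> e) *\<^sub>R gradf \<psi> x"
        using pe ye Dh by (simp add: DG_def)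
      have mn: "\<And>z. z \<in> cball x (\<psi> x) \<Longrightarrow> h y \<le> h z" using f_le_h[OF x] fy by metis
      have lag: "gradf h y = 0 \<or> (norm (y - x) = \<psi> x \<and> (\<exists>l. gradf h y = l *\<^sub>R (y - x)))"
        by (rule lagrange[OF hder[OF y2] psx y mn])
      have key: "\<bar>gradf h y \<bullet> e\<bar> = norm (gradf h y)"
      proof (cases "gradf h y = 0")
        case True then show ?thesis by simp
      next
        case False
        with lag obtain l where nyx: "norm (y - x) = \<psi> x" and gl: "gradf h y = l *\<^sub>R (y - x)" by blast
        have "gradf h y \<bullet> e = l * (1 / \<psi> x) * ((y - x) \<bullet> (y - x))"
          by (simp add: gl e_def)
        also have "(y - x) \<bullet> (y - x) = (\<psi> x)\<^sup>2" using nyx by (metis power2_norm_eq_inner)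
        finally have "gradf h y \<bullet> e = l * \<psi> x" using psx by (simp add: power2_eq_square)
        moreover have "norm (gradf h y) = \<bar>l\<bar> * \<psi> x" using gl nyx by simp
        ultimately show ?thesis using psx by (simp add: abs_mult)
      qed
      show "norm (p - Dh) = norm Dh * norm D\<psi>"
        using pd key Dh Dp by simp
    qed
  qed
  have "negligible ?N" by (rule N_negligible)
  moreover have "{x. \<not> (x \<in> ball 0 1 \<longrightarrow>
           (\<exists>Df. GDERIV f x :> Df \<and>
              (\<forall>y\<in>cball x (\<psi> x). f x = h y \<longrightarrow>
                 (\<forall>Dh D\<psi>. GDERIV h y :> Dh \<longrightarrow> GDERIV \<psi> x :> D\<psi> \<longrightarrow>
                    norm (Df - Dh) = norm Dh * norm D\<psi>))))} \<subseteq> ?N"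
    using good by blast
  ultimately show ?thesis unfolding eventually_ae_filter_negligible by blast
qed

end

theorem lemma5p4:
  fixes \<psi> h f :: "'a::euclidean_space \<Rightarrow> real"
  assumes "smooth_on (ball 0 2) \<psi>"
    and "smooth_on (ball 0 2) h"
    and "\<forall>x\<in>ball 0 2. 0 < \<psi> x \<and> \<psi> x < 1/2"
    and "\<forall>x\<in>ball 0 2. h x \<ge> 0"
    and "\<And>x. f x = (INF y\<in>cball x (\<psi> x). h y)"
  shows "AE x in lebesgue. x \<in> ball 0 1 \<longrightarrow>
           (\<exists>Df. GDERIV f x :> Df \<and>
              (\<forall>y\<in>cball x (\<psi> x). f x = h y \<longrightarrow>
                 (\<forall>Dh D\<psi>. GDERIV h y :> Dh \<longrightarrow> GDERIV \<psi> x :> D\<psi> \<longrightarrow>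
                    norm (Df - Dh) = norm Dh * norm D\<psi>)))"
proof -
  interpret L54 \<psi> h f using assms by unfold_locales auto
  show ?thesis by (rule main)
qed

end
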